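(* For every $n\ge0$ there is a push-out diagram of sets $$\begin{array}{ccc}\mathrm{Hom}(\mathbb{Z}^n,\mathbb{Z}/2) & \longrightarrow & \mathrm{Hom}(\mathbb{Z}^n,(\mathbb{Z}/2)^2)/\Sigma_3\\ \downarrow && \downarrow\\ \ast & \longrightarrow & \pi_0\,\mathrm{Hom}(\mathbb{Z}^n,SO(3))\end{array}$$ where $\Sigma_3$ acts on $(\mathbb{Z}/2)^2$ by permuting its three non-trivial elements, the top map is induced by one of the inclusions $\mathbb{Z}/2\subset(\mathbb{Z}/2)^2$ followed by the quotient, the right map is induced by an embedding $(\mathbb{Z}/2)^2\cong\bar Q\subset SO(3)$, and the bottom map picks out the component of the trivial homomorphism.
   Context: $\mathrm{Hom}(\mathbb{Z}^n,SO(3))$ is the space of $n$-tuples of pairwise commuting elements of $SO(3)$ (subspace of $SO(3)^n$), and $\pi_0$ is its set of path components. $\bar Q\cong(\mathbb{Z}/2)^2$ is the image in $SO(3)$ of the quaternion group $Q=\{\pm1,\pm\mathbf{i},\pm\mathbf{j},\pm\mathbf{k}\}\subset SU(2)$ under the double cover $R:SU(2)\to SO(3)$ (e.g. the diagonal matrices with entries $\pm1$), and the subgroup $\mathbb{Z}/2$ is $\bar Q\cap\bar T$ for a maximal torus $\bar T$ of $SO(3)$. *)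

theory Defs
  imports "HOL-Analysis.Analysis" "HOL-Library.Z2"
begin

text \<open>Pushout of sets via the universal property (tested against all maps into a set of type 'z).
  Objects are carrier sets, maps are functions considered on the carriers.\<close>
definition set_pushout ::
  "'z itself \<Rightarrow> 'a set \<Rightarrow> 'b set \<Rightarrow> 'c set \<Rightarrow> 'd set \<Rightarrow>
   ('a \<Rightarrow> 'b) \<Rightarrow> ('a \<Rightarrow> 'c) \<Rightarrow> ('b \<Rightarrow> 'd) \<Rightarrow> ('c \<Rightarrow> 'd) \<Rightarrow> bool" where
  "set_pushout _ A B C D f g h k \<longleftrightarrow>
     f \<in> A \<rightarrow> B \<and> g \<in> A \<rightarrow> C \<and> h \<in> B \<rightarrow> D \<and> k \<in> C \<rightarrow> D \<and>
     (\<forall>a\<in>A. h (f a) = k (g a)) \<and>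
     (\<forall>(u::'b \<Rightarrow> 'z) (v::'c \<Rightarrow> 'z). (\<forall>a\<in>A. u (f a) = v (g a)) \<longrightarrow>
        (\<exists>w. (\<forall>b\<in>B. w (h b) = u b) \<and> (\<forall>c\<in>C. w (k c) = v c) \<and>
             (\<forall>w'. (\<forall>b\<in>B. w' (h b) = u b) \<and> (\<forall>c\<in>C. w' (k c) = v c) \<longrightarrow>
                   (\<forall>d\<in>D. w' d = w d))))"

definition SO3 :: "(real^3^3) set" where
  "SO3 = {A. transpose A ** A = mat 1 \<and> det A = 1}"

text \<open>Hom(Z^n, SO(3)): n-tuples (indexed by {..<n}, extensional) of pairwise commuting elements.\<close>
definition HomSO3 :: "nat \<Rightarrow> (nat \<Rightarrow> real^3^3) set" where
  "HomSO3 n = {x \<in> {..<n} \<rightarrow>\<^sub>E SO3. \<forall>i<n. \<forall>j<n. x i ** x j = x j ** x i}"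

definition HomSO3_top :: "nat \<Rightarrow> (nat \<Rightarrow> real^3^3) topology" where
  "HomSO3_top n = subtopology (product_topology (\<lambda>_. euclidean) {..<n}) (HomSO3 n)"

definition pi0_HomSO3 :: "nat \<Rightarrow> (nat \<Rightarrow> real^3^3) set set" where
  "pi0_HomSO3 n = path_components_of (HomSO3_top n)"

text \<open>Hom(Z^n, Z/2) and Hom(Z^n, (Z/2)^2) as n-tuples (Z^n is free abelian on n generators).\<close>
definition HomZ2 :: "nat \<Rightarrow> (nat \<Rightarrow> bit) set" where
  "HomZ2 n = {..<n} \<rightarrow>\<^sub>E (UNIV :: bit set)"

definition HomV4 :: "nat \<Rightarrow> (nat \<Rightarrow> bit \<times> bit) set" where
  "HomV4 n = {..<n} \<rightarrow>\<^sub>E (UNIV :: (bit \<times> bit) set)"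

text \<open>Sigma_3 acting on (Z/2)^2: all permutations of (Z/2)^2 fixing 0, i.e. all permutations
  of the three non-trivial elements.\<close>
definition Sigma3 :: "(bit \<times> bit \<Rightarrow> bit \<times> bit) set" where
  "Sigma3 = {\<sigma>. bij \<sigma> \<and> \<sigma> (0, 0) = (0, 0)}"

definition V4_orbit :: "nat \<Rightarrow> (nat \<Rightarrow> bit \<times> bit) \<Rightarrow> (nat \<Rightarrow> bit \<times> bit) set" where
  "V4_orbit n x = (\<lambda>\<sigma>. restrict (\<sigma> \<circ> x) {..<n}) ` Sigma3"

definition HomV4_mod_Sigma3 :: "nat \<Rightarrow> (nat \<Rightarrow> bit \<times> bit) set set" where
  "HomV4_mod_Sigma3 n = V4_orbit n ` HomV4 n"

definition top_map :: "nat \<Rightarrow> (nat \<Rightarrow> bit) \<Rightarrow> (nat \<Rightarrow> bit \<times> bit) set" where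
  "top_map n a = V4_orbit n (restrict (\<lambda>i. (a i, 0)) {..<n})"

definition sgnbit :: "bit \<Rightarrow> real" where
  "sgnbit b = (if b = 0 then 1 else -1)"

definition Qbar_emb :: "bit \<times> bit \<Rightarrow> real^3^3" where
  "Qbar_emb p = (\<chi> i j. if i = j then
        (if i = 1 then sgnbit (fst p) else if i = 2 then sgnbit (snd p)
         else sgnbit (fst p) * sgnbit (snd p)) else 0)"

definition right_rep :: "nat \<Rightarrow> (nat \<Rightarrow> bit \<times> bit) \<Rightarrow> (nat \<Rightarrow> real^3^3) set" where
  "right_rep n x = path_component_of_set (HomSO3_top n) (restrict (Qbar_emb \<circ> x) {..<n})"

text \<open>Right map on orbits (via a representative; well-definedness is asserted in the theorem).\<close>
definition right_map :: "nat \<Rightarrow> (nat \<Rightarrow> bit \<times> bit) set \<Rightarrow> (nat \<Rightarrow> real^3^3) set" where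
  "right_map n Orb = right_rep n (SOME x. x \<in> HomV4 n \<and> V4_orbit n x = Orb)"

definition bottom_map :: "nat \<Rightarrow> unit \<Rightarrow> (nat \<Rightarrow> real^3^3) set" where
  "bottom_map n _ = path_component_of_set (HomSO3_top n) (restrict (\<lambda>_. mat 1) {..<n})"

end

theory Submission
  imports Defs
begin

definition blk :: "real \<Rightarrow> real \<Rightarrow> real^3^3" where
  "blk c s = (\<chi> i j. if i = 1 \<and> j = 1 then 1 else if i = 2 \<and> j = 2 then c
     else if i = 2 \<and> j = 3 then -s else if i = 3 \<and> j = 2 then s else if i = 3 \<and> j = 3 then c else 0)"

definition refl3 :: "real \<Rightarrow> real \<Rightarrow> real^3^3" where
  "refl3 p q = (\<chi> i j. if i = 1 \<and> j = 1 then -1 else if i = 2 \<and> j = 2 then p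
     else if i = 2 \<and> j = 3 then q else if i = 3 \<and> j = 2 then q else if i = 3 \<and> j = 3 then -p else 0)"

definition cj :: "real^3^3 \<Rightarrow> real^3^3 \<Rightarrow> real^3^3" where
  "cj Q X = transpose Q ** X ** Q"

lemmas m3 = vec_eq_iff forall_3 matrix_matrix_mult_def sum_3 transpose_def mat_def det_3
   matrix_vector_mult_def axis_def

lemma bit_cases: "(b::bit) = 0 \<or> b = 1" by (metis bit_not_zero_iff)

lemma blk_mult: "blk c s ** blk d t = blk (c*d - s*t) (c*t + s*d)"
  by (simp add: m3 blk_def algebra_simps)

lemma blk_1: "blk 1 0 = mat 1"
  by (simp add: m3 blk_def)

lemma SO3_blk: "c^2 + s^2 = 1 \<Longrightarrow> blk c s \<in> SO3"
  by (simp add: SO3_def m3 blk_def power2_eq_square algebra_simps)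

lemma SO3_rot: "A \<in> SO3 \<longleftrightarrow> rotation_matrix A"
  unfolding SO3_def rotation_matrix_def orthogonal_matrix_def
  using matrix_left_right_inverse by blast

lemma SO3_right: "A \<in> SO3 \<Longrightarrow> A ** transpose A = mat 1"
  by (simp add: SO3_rot rotation_matrix_def orthogonal_matrix_def)

lemma SO3_left: "A \<in> SO3 \<Longrightarrow> transpose A ** A = mat 1"
  by (simp add: SO3_rot rotation_matrix_def orthogonal_matrix_def)

lemma SO3_mult: "A \<in> SO3 \<Longrightarrow> B \<in> SO3 \<Longrightarrow> A ** B \<in> SO3"
  by (simp add: SO3_rot rotation_matrix_def orthogonal_matrix_mul det_mul)

lemma SO3_transpose: "A \<in> SO3 \<Longrightarrow> transpose A \<in> SO3"
  by (simp add: SO3_rot rotation_matrix_def)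

lemma SO3_one: "mat 1 \<in> SO3"
  by (simp add: SO3_def)

lemma cj_SO3: "Q \<in> SO3 \<Longrightarrow> X \<in> SO3 \<Longrightarrow> cj Q X \<in> SO3"
  by (simp add: cj_def SO3_mult SO3_transpose)

lemma cj_mult: "Q \<in> SO3 \<Longrightarrow> cj Q (X ** Y) = cj Q X ** cj Q Y"
proof -
  assume Q: "Q \<in> SO3"
  have "cj Q X ** cj Q Y = transpose Q ** X ** (Q ** transpose Q) ** Y ** Q"
    by (simp add: cj_def matrix_mul_assoc)
  also have "\<dots> = cj Q (X ** Y)" using SO3_right[OF Q] by (simp add: cj_def matrix_mul_assoc)
  finally show ?thesis by simp
qed

lemma cj_one: "Q \<in> SO3 \<Longrightarrow> cj Q (mat 1) = mat 1"
  by (simp add: cj_def SO3_left)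

lemma cj_inv: "Q \<in> SO3 \<Longrightarrow> Q ** cj Q X ** transpose Q = X"
proof -
  assume Q: "Q \<in> SO3"
  have "Q ** cj Q X ** transpose Q = (Q ** transpose Q) ** X ** (Q ** transpose Q)"
    by (simp add: cj_def matrix_mul_assoc)
  thus ?thesis using SO3_right[OF Q] by simp
qed

lemma cj_comp: "cj (Q ** R) X = cj R (cj Q X)"
  by (simp add: cj_def matrix_transpose_mul matrix_mul_assoc)

lemma cj_trace: "Q \<in> SO3 \<Longrightarrow> trace (cj Q X) = trace X"
proof -
  assume Q: "Q \<in> SO3"
  have "trace (cj Q X) = trace (transpose Q ** (X ** Q))"
    by (simp add: cj_def matrix_mul_assoc)
  also have "\<dots> = trace ((X ** Q) ** transpose Q)" by (rule trace_mul_sym)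
  also have "\<dots> = trace X" using SO3_right[OF Q] by (simp add: matrix_mul_assoc[symmetric])
  finally show ?thesis .
qed

lemma cj_comm: "Q \<in> SO3 \<Longrightarrow> X ** Y = Y ** X \<Longrightarrow> cj Q X ** cj Q Y = cj Q Y ** cj Q X"
  by (simp add: cj_mult[symmetric])

lemma mm_diff3: "(A::real^3^3) ** (B - C) = A ** B - A ** C"
  by (simp add: matrix_matrix_mult_def vec_eq_iff sum_subtractf algebra_simps)
lemma tr_diff3: "transpose ((A::real^3^3) - B) = transpose A - transpose B"
  by (simp add: m3)

lemma det_minus_I: "det (mat 1 - A) = - det (A - mat 1 :: real^3^3)"
  unfolding det_3 by (simp add: mat_def algebra_simps)

lemma SO3_fix:
  assumes A: "A \<in> SO3" shows "\<exists>u. norm u = 1 \<and> A *v u = u"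
proof -
  have "transpose A ** (A - mat 1) = mat 1 - transpose A"
    using SO3_left[OF A] by (simp add: mm_diff3)
  also have "\<dots> = transpose (mat 1 - A)" by (simp add: tr_diff3)
  finally have e: "transpose A ** (A - mat 1) = transpose (mat 1 - A)" .
  have "det (transpose A ** (A - mat 1)) = det (A - mat 1)"
    using A by (simp add: det_mul SO3_def)
  hence "det (A - mat 1) = det (mat 1 - A)" unfolding e det_transpose by simp
  hence "det (A - mat 1) = 0" using det_minus_I[of A] by simp
  hence "\<not> invertible (A - mat 1)" by (simp add: invertible_det_nz)
  then obtain v where v: "v \<noteq> 0" "(A - mat 1) *v v = 0"
    by (metis matrix_left_invertible_ker invertible_left_inverse)
  have Av: "A *v v = v" using v(2) by (simp add: matrix_vector_mult_diff_rdistrib)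
  let ?u = "v /\<^sub>R norm v"
  have "A *v ?u = ?u" using Av by (simp add: matrix_vector_mult_scaleR)
  moreover have "norm ?u = 1" using v(1) by simp
  ultimately show ?thesis by blast
qed

lemma frame:
  fixes u :: "real^3" assumes "norm u = 1" shows "\<exists>R\<in>SO3. R *v axis 1 1 = u"
proof -
  obtain R where "rotation_matrix R" "R *v axis 1 1 = u"
    using rotation_matrix_exists_basis[of u 1] assms by auto
  thus ?thesis by (auto simp: SO3_rot)
qed

lemma SO3_eqs: assumes "B \<in> SO3" shows
 "B$1$1^2 + B$2$1^2 + B$3$1^2 = 1"
 "B$1$2^2 + B$2$2^2 + B$3$2^2 = 1"
 "B$1$3^2 + B$2$3^2 + B$3$3^2 = 1"
 "B$1$1*B$1$2 + B$2$1*B$2$2 + B$3$1*B$3$2 = 0"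
 "B$1$1*B$1$3 + B$2$1*B$2$3 + B$3$1*B$3$3 = 0"
 "B$1$2*B$1$3 + B$2$2*B$2$3 + B$3$2*B$3$3 = 0"
 "B$1$1^2 + B$1$2^2 + B$1$3^2 = 1"
 "B$2$1^2 + B$2$2^2 + B$2$3^2 = 1"
 "B$3$1^2 + B$3$2^2 + B$3$3^2 = 1"
 "B$1$1*B$2$1 + B$1$2*B$2$2 + B$1$3*B$2$3 = 0"
 "B$1$1*B$3$1 + B$1$2*B$3$2 + B$1$3*B$3$3 = 0"
 "B$2$1*B$3$1 + B$2$2*B$3$2 + B$2$3*B$3$3 = 0"
 "B$1$1 * B$2$2 * B$3$3 + B$1$2 * B$2$3 * B$3$1 + B$1$3 * B$2$1 * B$3$2 -
    B$1$1 * B$2$3 * B$3$2 - B$1$2 * B$2$1 * B$3$3 - B$1$3 * B$2$2 * B$3$1 = 1"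
proof -
  have L: "transpose B ** B = mat 1" using SO3_left[OF assms] .
  have R: "B ** transpose B = mat 1" using SO3_right[OF assms] .
  have D: "det B = 1" using assms by (simp add: SO3_def)
  have "(transpose B ** B)$1$1 = 1" "(transpose B ** B)$2$2 = 1"
       "(transpose B ** B)$3$3 = 1" "(transpose B ** B)$1$2 = 0"
       "(transpose B ** B)$1$3 = 0" "(transpose B ** B)$2$3 = 0"
       "(B ** transpose B)$1$1 = 1" "(B ** transpose B)$2$2 = 1"
       "(B ** transpose B)$3$3 = 1" "(B ** transpose B)$1$2 = 0"
       "(B ** transpose B)$1$3 = 0" "(B ** transpose B)$2$3 = 0"
    using L R by (simp_all add: mat_def)
  then show
 "B$1$1^2 + B$2$1^2 + B$3$1^2 = 1"
 "B$1$2^2 + B$2$2^2 + B$3$2^2 = 1"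
 "B$1$3^2 + B$2$3^2 + B$3$3^2 = 1"
 "B$1$1*B$1$2 + B$2$1*B$2$2 + B$3$1*B$3$2 = 0"
 "B$1$1*B$1$3 + B$2$1*B$2$3 + B$3$1*B$3$3 = 0"
 "B$1$2*B$1$3 + B$2$2*B$2$3 + B$3$2*B$3$3 = 0"
 "B$1$1^2 + B$1$2^2 + B$1$3^2 = 1"
 "B$2$1^2 + B$2$2^2 + B$2$3^2 = 1"
 "B$3$1^2 + B$3$2^2 + B$3$3^2 = 1"
 "B$1$1*B$2$1 + B$1$2*B$2$2 + B$1$3*B$2$3 = 0"
 "B$1$1*B$3$1 + B$1$2*B$3$2 + B$1$3*B$3$3 = 0"
 "B$2$1*B$3$1 + B$2$2*B$3$2 + B$2$3*B$3$3 = 0"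
    by (simp_all add: matrix_matrix_mult_def sum_3 transpose_def mat_def power2_eq_square)
  show "B$1$1 * B$2$2 * B$3$3 + B$1$2 * B$2$3 * B$3$1 + B$1$3 * B$2$1 * B$3$2 -
    B$1$1 * B$2$3 * B$3$2 - B$1$2 * B$2$1 * B$3$3 - B$1$3 * B$2$2 * B$3$1 = 1"
    using D by (simp add: det_3)
qed

lemma sq0: "(x::real)^2 + y^2 = 0 \<Longrightarrow> x = 0 \<and> y = 0"
  by (simp add: sum_power2_eq_zero_iff)

lemma rot2: "(a::real)^2+b^2=1 \<Longrightarrow> c^2+d^2=1 \<Longrightarrow> a*c+b*d=0 \<Longrightarrow> a*d-c*b=1 \<Longrightarrow> d=a \<and> c=-b"
proof -
  assume h: "a^2+b^2=1" "c^2+d^2=1" "a*c+b*d=0" "a*d-c*b=1"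
  have "(a-d)^2+(b+c)^2 = (a^2+b^2)+(c^2+d^2) - 2*(a*d-c*b)"
    by (simp add: power2_eq_square algebra_simps)
  also have "\<dots> = 0" using h by simp
  finally have "a - d = 0 \<and> b + c = 0" by (rule sq0)
  thus ?thesis by simp
qed

lemma refl2: "(a::real)^2+b^2=1 \<Longrightarrow> c^2+d^2=1 \<Longrightarrow> a*c+b*d=0 \<Longrightarrow> a*d-c*b=-1 \<Longrightarrow> d=-a \<and> c=b"
proof -
  assume h: "a^2+b^2=1" "c^2+d^2=1" "a*c+b*d=0" "a*d-c*b=-1"
  have "(a+d)^2+(b-c)^2 = (a^2+b^2)+(c^2+d^2) + 2*(a*d-c*b)"
    by (simp add: power2_eq_square algebra_simps)
  also have "\<dots> = 0" using h by simp
  finally have "a + d = 0 \<and> b - c = 0" by (rule sq0)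
  thus ?thesis by simp
qed

lemma fix_e1:
  assumes B: "B \<in> SO3" and f: "B *v axis 1 1 = axis 1 1"
  shows "\<exists>c s. c^2 + s^2 = 1 \<and> B = blk c s"
proof -
  have "(B *v axis 1 1)$1 = axis 1 1 $ (1::3)" "(B *v axis 1 1)$2 = axis 1 1 $ (2::3)"
       "(B *v axis 1 1)$3 = axis 1 1 $ (3::3)" using f by simp_all
  hence c1: "B$1$1 = 1" "B$2$1 = 0" "B$3$1 = 0"
    by (simp_all add: matrix_vector_mult_def sum_3 axis_def)
  note e = SO3_eqs[OF B]
  have "B$1$2^2 + B$1$3^2 = 0" using e(7) c1 by simp
  hence "B$1$2 = 0 \<and> B$1$3 = 0" by (rule sq0)
  hence z: "B$1$2 = 0" "B$1$3 = 0" by simp_all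
  have h1: "(B$2$2)^2 + (B$3$2)^2 = 1" using e(2) z by simp
  have h2: "(B$2$3)^2 + (B$3$3)^2 = 1" using e(3) z by simp
  have h3: "B$2$2 * B$2$3 + B$3$2 * B$3$3 = 0" using e(6) z by simp
  have h4: "B$2$2 * B$3$3 - B$2$3 * B$3$2 = 1" using e(13) z c1 by simp
  have "B$3$3 = B$2$2 \<and> B$2$3 = - B$3$2"
    by (rule rot2[OF h1 h2 h3 h4])
  hence "B = blk (B$2$2) (B$3$2)"
    using c1 z by (simp add: vec_eq_iff forall_3 blk_def)
  moreover have "(B$2$2)^2 + (B$3$2)^2 = 1" using e(2) z by simp
  ultimately show ?thesis by blast
qed

lemma lin2: "(c-1)*x + s*y = 0 \<Longrightarrow> -s*x + (c-1)*y = 0 \<Longrightarrow> \<not>(c=1 \<and> s=0) \<Longrightarrow> x = 0 \<and> (y::real) = 0"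
proof -
  assume h: "(c-1)*x + s*y = 0" "-s*x + (c-1)*y = 0" "\<not>(c=1 \<and> s=0)"
  have pos: "(c-1)^2 + s^2 \<noteq> 0"
  proof
    assume "(c-1)^2 + s^2 = 0"
    hence "c - 1 = 0 \<and> s = 0" by (rule sq0)
    thus False using h(3) by simp
  qed
  have "((c-1)^2 + s^2) * x = (c-1)*((c-1)*x + s*y) - s*(-s*x + (c-1)*y)"
    by (simp add: power2_eq_square algebra_simps)
  hence "((c-1)^2 + s^2) * x = 0" using h by simp
  hence "x = 0" using pos by auto
  moreover have "((c-1)^2 + s^2) * y = s*((c-1)*x + s*y) + (c-1)*(-s*x + (c-1)*y)"
    by (simp add: power2_eq_square algebra_simps)
  hence "((c-1)^2 + s^2) * y = 0" using h by simp
  hence "y = 0" using pos by auto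
  ultimately show ?thesis by simp
qed

lemma comm_blk:
  assumes C: "C \<in> SO3" and cs: "c^2+s^2=1" "\<not>(c=1 \<and> s=0)" and cm: "C ** blk c s = blk c s ** C"
  shows "(\<exists>d t. d^2+t^2=1 \<and> C = blk d t) \<or> (c = -1 \<and> s = 0 \<and> (\<exists>p q. p^2+q^2=1 \<and> C = refl3 p q))"
proof -
  have E: "(C ** blk c s)$1$2 = (blk c s ** C)$1$2" "(C ** blk c s)$1$3 = (blk c s ** C)$1$3"
     "(C ** blk c s)$2$1 = (blk c s ** C)$2$1" "(C ** blk c s)$3$1 = (blk c s ** C)$3$1"
     "(C ** blk c s)$2$2 = (blk c s ** C)$2$2" "(C ** blk c s)$2$3 = (blk c s ** C)$2$3"
    using cm by simp_all
  have e1: "(c-1)*C$1$2 + s*C$1$3 = 0" using E(1) by (simp add: matrix_matrix_mult_def sum_3 blk_def algebra_simps)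
  have e2: "-s*C$1$2 + (c-1)*C$1$3 = 0" using E(2) by (simp add: matrix_matrix_mult_def sum_3 blk_def algebra_simps)
  have e3: "(c-1)*C$2$1 + (-s)*C$3$1 = 0" using E(3) by (simp add: matrix_matrix_mult_def sum_3 blk_def algebra_simps)
  have e4: "-(-s)*C$2$1 + (c-1)*C$3$1 = 0" using E(4) by (simp add: matrix_matrix_mult_def sum_3 blk_def algebra_simps)
  have e5: "s*C$2$3 = - s*C$3$2" using E(5) by (simp add: matrix_matrix_mult_def sum_3 blk_def algebra_simps)
  have e6: "s*C$2$2 = s*C$3$3" using E(6) by (simp add: matrix_matrix_mult_def sum_3 blk_def algebra_simps) metis
  have "C$1$2 = 0 \<and> C$1$3 = 0" by (rule lin2[OF e1 e2 cs(2)])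
  hence z1: "C$1$2 = 0" "C$1$3 = 0" by simp_all
  have "\<not>(c=1 \<and> -s=0)" using cs(2) by simp
  hence "C$2$1 = 0 \<and> C$3$1 = 0" by (rule lin2[OF e3 e4])
  hence z2: "C$2$1 = 0" "C$3$1 = 0" by simp_all
  note e = SO3_eqs[OF C]
  have "C$1$1^2 = 1" using e(7) z1 by simp
  hence "C$1$1 = 1 \<or> C$1$1 = -1" by (simp add: power2_eq_1_iff)
  have h1: "(C$2$2)^2 + (C$3$2)^2 = 1" using e(2) z1 by simp
  have h2: "(C$2$3)^2 + (C$3$3)^2 = 1" using e(3) z1 by simp
  have h3: "C$2$2 * C$2$3 + C$3$2 * C$3$3 = 0" using e(6) z1 by simp
  have h4: "C$1$1 * (C$2$2 * C$3$3 - C$2$3 * C$3$2) = 1" using e(13) z1 z2 by (simp add: algebra_simps)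
  show ?thesis
  proof (cases "C$1$1 = 1")
    case True
    hence "C$2$2 * C$3$3 - C$2$3 * C$3$2 = 1" using h4 by simp
    hence "C$3$3 = C$2$2 \<and> C$2$3 = - C$3$2" by (rule rot2[OF h1 h2 h3])
    hence "C = blk (C$2$2) (C$3$2)" using True z1 z2 by (simp add: vec_eq_iff forall_3 blk_def)
    thus ?thesis using h1 by blast
  next
    case False
    hence m: "C$1$1 = -1" using \<open>C$1$1 = 1 \<or> C$1$1 = -1\<close> by simp
    hence "C$2$2 * C$3$3 - C$2$3 * C$3$2 = -1" using h4 by simp
    hence r: "C$3$3 = - C$2$2 \<and> C$2$3 = C$3$2" by (rule refl2[OF h1 h2 h3])
    have s1: "s*C$3$2 = 0" using e5 r by simp
    have s2: "s*C$2$2 = 0" using e6 r by simp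
    have "s^2 = (s*C$2$2)^2 + (s*C$3$2)^2"
      using h1 by (simp add: power_mult_distrib algebra_simps flip: distrib_left)
    hence s0: "s = 0" using s1 s2 by simp
    hence "c^2 = 1" using cs(1) by simp
    hence "c = -1" using cs(2) s0 by (simp add: power2_eq_1_iff)
    moreover have "C = refl3 (C$2$2) (C$3$2)" using m r z1 z2 by (simp add: vec_eq_iff forall_3 refl3_def)
    ultimately show ?thesis using s0 h1 by blast
  qed
qed

lemma sgn_simps[simp]: "sgnbit 0 = 1" "sgnbit 1 = -1" by (simp_all add: sgnbit_def)

lemma Qbar_01: "Qbar_emb (0,1) = blk (-1) 0"
  by (simp add: Qbar_emb_def blk_def vec_eq_iff forall_3)

lemma Qbar_00: "Qbar_emb (0,0) = mat 1"
  by (simp add: Qbar_emb_def mat_def vec_eq_iff forall_3)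

lemma half_vec: "p^2+q^2=1 \<Longrightarrow> \<exists>a b::real. a^2+b^2=1 \<and> p*a+q*b=a \<and> q*a-p*b=b"
proof -
  assume h: "p^2+q^2=1"
  show ?thesis
  proof (cases "p = -1")
    case True
    hence "q = 0" using h by simp
    thus ?thesis using True by (intro exI[of _ 0] exI[of _ 1]) simp
  next
    case False
    have "p \<ge> -1"
    proof (rule ccontr)
      assume "\<not> p \<ge> -1" hence "p^2 > 1" by (smt (verit) one_less_power pos2 power2_minus)
      thus False using h by (smt (verit) zero_le_power2)
    qed
    hence pos: "2 + 2*p > 0" using False by simp
    define N where "N = sqrt (2 + 2*p)"
    have N: "N > 0" "N^2 = 2 + 2*p" using pos by (simp_all add: N_def)
    have "((1+p)/N)^2 + (q/N)^2 = ((1+p)^2 + q^2) / N^2" by (metis add_divide_distrib power_divide)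
    also have "(1+p)^2 + q^2 = 2 + 2*p" using h by (simp add: power2_eq_square algebra_simps)
    finally have a1: "((1+p)/N)^2 + (q/N)^2 = 1" using N pos by simp
    have a2: "p*((1+p)/N) + q*(q/N) = (1+p)/N"
    proof -
      have "p*((1+p)/N) + q*(q/N) = (p + (p^2 + q^2))/N" by (simp add: power2_eq_square add_divide_distrib algebra_simps)
      thus ?thesis using h by (simp add: add.commute)
    qed
    have a3: "q*((1+p)/N) - p*(q/N) = q/N" by (simp add: algebra_simps diff_divide_distrib add_divide_distrib)
    show ?thesis using a1 a2 a3 by blast
  qed
qed

lemma refl_diag:
  assumes "p^2+q^2=1"
  shows "\<exists>a b. a^2+b^2=1 \<and> cj (blk a b) (refl3 p q) = Qbar_emb (1,0) \<and> cj (blk a b) (blk (-1) 0) = blk (-1) 0"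
proof -
  obtain a b where ab: "a^2+b^2=1" "p*a+q*b=a" "q*a-p*b=b" using half_vec[OF assms] by blast
  have eq: "refl3 p q ** blk a b = blk a b ** Qbar_emb (1,0)"
    using ab by (simp add: vec_eq_iff forall_3 matrix_matrix_mult_def sum_3 blk_def refl3_def Qbar_emb_def algebra_simps)
  have "cj (blk a b) (refl3 p q) = transpose (blk a b) ** (refl3 p q ** blk a b)"
    by (simp add: cj_def matrix_mul_assoc)
  also have "\<dots> = (transpose (blk a b) ** blk a b) ** Qbar_emb (1,0)"
    unfolding eq by (simp add: matrix_mul_assoc)
  also have "\<dots> = Qbar_emb (1,0)" using SO3_left[OF SO3_blk[OF ab(1)]] by simp
  finally have 1: "cj (blk a b) (refl3 p q) = Qbar_emb (1,0)" .
  have eq2: "blk (-1) 0 ** blk a b = blk a b ** blk (-1) 0" by (simp add: blk_mult)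
  have "cj (blk a b) (blk (-1) 0) = transpose (blk a b) ** (blk (-1) 0 ** blk a b)"
    by (simp add: cj_def matrix_mul_assoc)
  also have "\<dots> = (transpose (blk a b) ** blk a b) ** blk (-1) 0"
    unfolding eq2 by (simp add: matrix_mul_assoc)
  also have "\<dots> = blk (-1) 0" using SO3_left[OF SO3_blk[OF ab(1)]] by simp
  finally show ?thesis using 1 ab(1) by blast
qed

lemma diag_Qbar:
  assumes C: "C \<in> SO3" and c1: "C ** Qbar_emb (1,0) = Qbar_emb (1,0) ** C"
    and c2: "C ** Qbar_emb (0,1) = Qbar_emb (0,1) ** C"
  shows "\<exists>p. C = Qbar_emb p"
proof -
  have E: "(C ** Qbar_emb (1,0))$1$2 = (Qbar_emb (1,0) ** C)$1$2"
     "(C ** Qbar_emb (1,0))$2$1 = (Qbar_emb (1,0) ** C)$2$1"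
     "(C ** Qbar_emb (1,0))$2$3 = (Qbar_emb (1,0) ** C)$2$3"
     "(C ** Qbar_emb (1,0))$3$2 = (Qbar_emb (1,0) ** C)$3$2"
     "(C ** Qbar_emb (0,1))$1$3 = (Qbar_emb (0,1) ** C)$1$3"
     "(C ** Qbar_emb (0,1))$3$1 = (Qbar_emb (0,1) ** C)$3$1"
    using c1 c2 by simp_all
  hence z: "C$1$2 = 0" "C$2$1 = 0" "C$2$3 = 0" "C$3$2 = 0" "C$1$3 = 0" "C$3$1 = 0"
    by (simp_all add: matrix_matrix_mult_def sum_3 Qbar_emb_def)
  note e = SO3_eqs[OF C]
  have d1: "C$1$1 = 1 \<or> C$1$1 = -1" using e(7) z by (simp add: power2_eq_1_iff)
  have d2: "C$2$2 = 1 \<or> C$2$2 = -1" using e(8) z by (simp add: power2_eq_1_iff)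
  have d: "C$1$1 * C$2$2 * C$3$3 = 1" using e(13) z by simp
  define p where "p = ((if C$1$1 = 1 then 0 else 1) :: bit, (if C$2$2 = 1 then 0 else 1) :: bit)"
  have "C = Qbar_emb p"
    using d1 d2 d z unfolding p_def
    by (auto simp: vec_eq_iff forall_3 Qbar_emb_def)
  thus ?thesis by blast
qed

lemma cj_id: "cj (mat 1) X = X" by (simp add: cj_def)

lemma TL:
  assumes S: "\<forall>i\<in>I. x i \<in> SO3" and C: "\<forall>i\<in>I. \<forall>j\<in>I. x i ** x j = x j ** x i"
  shows "\<exists>Q\<in>SO3. (\<forall>i\<in>I. \<exists>c s. c^2+s^2=1 \<and> cj Q (x i) = blk c s) \<or> (\<forall>i\<in>I. \<exists>p. cj Q (x i) = Qbar_emb p)"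
proof (cases "\<forall>i\<in>I. x i = mat 1")
  case True
  have "\<forall>i\<in>I. \<exists>c s. c^2+s^2=1 \<and> cj (mat 1) (x i) = blk c s"
  proof
    fix i assume "i \<in> I"
    hence "cj (mat 1) (x i) = blk 1 0" using True by (simp add: cj_id blk_1)
    thus "\<exists>c s. c^2+s^2=1 \<and> cj (mat 1) (x i) = blk c s" by (intro exI[of _ 1] exI[of _ 0]) simp
  qed
  thus ?thesis using SO3_one by blast
next
  case False
  then obtain k where k: "k \<in> I" "x k \<noteq> mat 1" by blast
  obtain u where u: "norm u = 1" "x k *v u = u" using SO3_fix S k(1) by blast
  obtain R where R: "R \<in> SO3" "R *v axis 1 1 = u" using frame[OF u(1)] by blast
  define y where "y i = cj R (x i)" for i
  have yS: "y i \<in> SO3" if "i \<in> I" for i using S that R(1) by (simp add: y_def cj_SO3)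
  have yC: "y i ** y j = y j ** y i" if "i \<in> I" "j \<in> I" for i j
    using C that R(1) by (simp add: y_def cj_comm)
  have "y k *v axis 1 1 = transpose R *v (x k *v (R *v axis 1 1))"
    by (simp add: y_def cj_def matrix_vector_mul_assoc matrix_mul_assoc)
  also have "\<dots> = transpose R *v (R *v axis 1 1)" using u R by (simp del: transpose_matrix_vector)
  also have "\<dots> = (transpose R ** R) *v axis 1 1" by (simp only: matrix_vector_mul_assoc)
  also have "\<dots> = axis 1 1" using SO3_left[OF R(1)] by simp
  finally obtain c s where cs: "c^2+s^2=1" "y k = blk c s" using fix_e1 yS[OF k(1)] by blast
  have ncs: "\<not>(c=1 \<and> s=0)"
  proof
    assume "c=1 \<and> s=0"
    hence "y k = mat 1" using cs blk_1 by simp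
    hence "x k = R ** mat 1 ** transpose R" using cj_inv[OF R(1), of "x k"] by (simp add: y_def)
    thus False using k(2) SO3_right[OF R(1)] by simp
  qed
  have cb: "(\<exists>d t. d^2+t^2=1 \<and> y i = blk d t) \<or> (c = -1 \<and> s = 0 \<and> (\<exists>p q. p^2+q^2=1 \<and> y i = refl3 p q))"
    if "i \<in> I" for i
    by (rule comm_blk[OF yS[OF that] cs(1) ncs]) (use yC[OF that k(1)] cs(2) in simp)
  show ?thesis
  proof (cases "\<forall>i\<in>I. \<exists>d t. d^2+t^2=1 \<and> y i = blk d t")
    case True
    thus ?thesis using R(1) unfolding y_def by blast
  next
    case False
    then obtain j where j: "j \<in> I" "\<not>(\<exists>d t. d^2+t^2=1 \<and> y j = blk d t)" by blast
    then obtain p q where pq: "c = -1" "s = 0" "p^2+q^2=1" "y j = refl3 p q" using cb by blast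
    obtain a b where ab: "a^2+b^2=1" "cj (blk a b) (refl3 p q) = Qbar_emb (1,0)"
        "cj (blk a b) (blk (-1) 0) = blk (-1) 0" using refl_diag[OF pq(3)] by blast
    define Q where "Q = R ** blk a b"
    have QS: "Q \<in> SO3" using R(1) SO3_blk[OF ab(1)] by (simp add: Q_def SO3_mult)
    have z: "cj Q (x i) = cj (blk a b) (y i)" for i by (simp add: Q_def y_def cj_comp)
    have zk: "cj Q (x k) = Qbar_emb (0,1)" using z[of k] cs(2) pq ab(3) by (simp add: Qbar_01)
    have zj: "cj Q (x j) = Qbar_emb (1,0)" using z[of j] pq ab(2) by simp
    have "\<exists>p. cj Q (x i) = Qbar_emb p" if i: "i \<in> I" for i
    proof (rule diag_Qbar)
      show "cj Q (x i) \<in> SO3" using QS S i by (simp add: cj_SO3)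
      show "cj Q (x i) ** Qbar_emb (1,0) = Qbar_emb (1,0) ** cj Q (x i)"
        using cj_comm[OF QS C[rule_format, OF i j(1)]] zj by simp
      show "cj Q (x i) ** Qbar_emb (0,1) = Qbar_emb (0,1) ** cj Q (x i)"
        using cj_comm[OF QS C[rule_format, OF i k(1)]] zk by simp
    qed
    thus ?thesis using QS by blast
  qed
qed

definition gfun :: "real^3^3 \<Rightarrow> real^3^3 \<Rightarrow> real" where
  "gfun A B = trace A + trace B + trace (A ** B)"

definition om :: "bit \<times> bit \<Rightarrow> bit \<times> bit \<Rightarrow> bool" where
  "om p q \<longleftrightarrow> p \<noteq> (0,0) \<and> q \<noteq> (0,0) \<and> p \<noteq> q"

lemma gfun_cj: "Q \<in> SO3 \<Longrightarrow> gfun (cj Q A) (cj Q B) = gfun A B"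
  by (simp add: gfun_def cj_trace flip: cj_mult)

lemma trace_blk: "trace (blk c s) = 1 + 2*c"
  by (simp add: trace_def sum_3 blk_def)

lemma gfun_blk: "c^2+s^2=1 \<Longrightarrow> d^2+t^2=1 \<Longrightarrow> gfun (blk c s) (blk d t) \<ge> 0"
proof -
  assume h: "c^2+s^2=1" "d^2+t^2=1"
  have "gfun (blk c s) (blk d t) = 3 + 2*c + 2*d + 2*(c*d - s*t)"
    by (simp add: gfun_def blk_mult trace_blk)
  also have "\<dots> = (c+d+1)^2 + (s-t)^2 + (1 - (c^2+s^2)) + (1 - (d^2+t^2))"
    by (simp add: power2_eq_square algebra_simps)
  also have "\<dots> = (c+d+1)^2 + (s-t)^2" using h by simp
  finally show ?thesis by simp
qed

lemma bitpair_cases: obtains "p = (0,0)" | "p = (0,1)" | "p = (1,0)" | "p = ((1::bit),(1::bit))"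
  by (metis bit_cases prod.collapse)

lemma gfun_Qbar_om: "gfun (Qbar_emb p) (Qbar_emb q) < 0 \<longleftrightarrow> om p q"
  by (cases p rule: bitpair_cases; cases q rule: bitpair_cases;
      simp add: gfun_def om_def trace_def sum_3 Qbar_emb_def matrix_matrix_mult_def)

lemma gfun_Qbar_dich: "gfun (Qbar_emb p) (Qbar_emb q) = -3 \<or> gfun (Qbar_emb p) (Qbar_emb q) \<ge> 0"
  by (cases p rule: bitpair_cases; cases q rule: bitpair_cases;
      simp add: gfun_def om_def trace_def sum_3 Qbar_emb_def matrix_matrix_mult_def)

lemma gfun_dich:
  assumes A: "A \<in> SO3" and B: "B \<in> SO3" and AB: "A ** B = B ** A"
  shows "gfun A B = -3 \<or> gfun A B \<ge> 0"
proof -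
  define x where "x b = (if b then A else B)" for b :: bool
  have "\<forall>i\<in>UNIV. x i \<in> SO3" using A B by (simp add: x_def)
  moreover have "\<forall>i\<in>UNIV. \<forall>j\<in>UNIV. x i ** x j = x j ** x i" using AB by (simp add: x_def)
  ultimately obtain Q where Q: "Q \<in> SO3"
    and D: "(\<forall>i\<in>UNIV. \<exists>c s. c^2+s^2=1 \<and> cj Q (x i) = blk c s) \<or> (\<forall>i\<in>UNIV. \<exists>p. cj Q (x i) = Qbar_emb p)"
    using TL[of UNIV x] by blast
  have g: "gfun A B = gfun (cj Q (x True)) (cj Q (x False))" using gfun_cj[OF Q] by (simp add: x_def)
  from D show ?thesis
  proof
    assume H: "\<forall>i\<in>UNIV. \<exists>c s. c^2+s^2=1 \<and> cj Q (x i) = blk c s"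
    obtain c s where "c^2+s^2=1" "cj Q (x True) = blk c s" using bspec[OF H UNIV_I, of True] by blast
    moreover obtain d t where "d^2+t^2=1" "cj Q (x False) = blk d t" using bspec[OF H UNIV_I, of False] by blast
    ultimately
    show ?thesis using g gfun_blk by simp
  next
    assume H: "\<forall>i\<in>UNIV. \<exists>p. cj Q (x i) = Qbar_emb p"
    obtain p where "cj Q (x True) = Qbar_emb p" using bspec[OF H UNIV_I, of True] by blast
    moreover obtain q where "cj Q (x False) = Qbar_emb q" using bspec[OF H UNIV_I, of False] by blast
    ultimately
    show ?thesis using g gfun_Qbar_dich by simp
  qed
qed

lemma topspace_X: "topspace (HomSO3_top n) = HomSO3 n"
  unfolding HomSO3_top_def by (auto simp: HomSO3_def)

lemma pathin_X: "pathin (HomSO3_top n) g \<longleftrightarrow>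
   (\<forall>t\<in>{0..1}. g t \<in> HomSO3 n) \<and> (\<forall>i<n. continuous_on {0..1} (\<lambda>t. g t i))"
proof -
  have ext: "HomSO3 n \<subseteq> extensional {..<n}" by (auto simp: HomSO3_def PiE_def)
  show ?thesis
    unfolding pathin_def HomSO3_top_def continuous_map_in_subtopology continuous_map_componentwise
    using ext by (auto simp: Pi_iff)
qed

lemma cont_mm: "continuous_on S A \<Longrightarrow> continuous_on S B \<Longrightarrow> continuous_on S (\<lambda>t. A t ** B t :: real^3^3)"
  unfolding matrix_matrix_mult_def
  by (intro continuous_on_vec_lambda continuous_on_sum continuous_on_mult continuous_on_component)

lemma cont_tr: "continuous_on S A \<Longrightarrow> continuous_on S (\<lambda>t. transpose (A t :: real^3^3))"
  unfolding transpose_def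
  by (intro continuous_on_vec_lambda continuous_on_component)

lemma cont_trace: "continuous_on S A \<Longrightarrow> continuous_on S (\<lambda>t. trace (A t :: real^3^3))"
  unfolding trace_def
  by (intro continuous_on_sum continuous_on_component)

lemma cont_cj: "continuous_on S P \<Longrightarrow> continuous_on S (\<lambda>t. cj (P t) X)"
  unfolding cj_def by (intro cont_mm cont_tr continuous_on_const)

lemma cont_gfun: "continuous_on S A \<Longrightarrow> continuous_on S B \<Longrightarrow> continuous_on S (\<lambda>t. gfun (A t) (B t))"
  unfolding gfun_def by (intro continuous_on_add cont_trace cont_mm)

definition M0 :: "real^3^3" where "M0 = (\<chi> i j. if i = 1 \<and> j = 1 then 1 else 0)"
definition M1 :: "real^3^3" where "M1 = (\<chi> i j. if (i = 2 \<and> j = 2) \<or> (i = 3 \<and> j = 3) then 1 else 0)"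
definition M2 :: "real^3^3" where "M2 = (\<chi> i j. if i = 3 \<and> j = 2 then 1 else if i = 2 \<and> j = 3 then -1 else 0)"

lemma blk_lin: "blk c s = M0 + c *\<^sub>R M1 + s *\<^sub>R M2"
  by (simp add: blk_def M0_def M1_def M2_def vec_eq_iff forall_3)

lemma cont_blk: "continuous_on S c \<Longrightarrow> continuous_on S s \<Longrightarrow> continuous_on S (\<lambda>t. blk (c t) (s t))"
  unfolding blk_lin by (intro continuous_intros)

lemma path_inv:
  assumes p: "path_component_of (HomSO3_top n) a b" and i: "i < n" and j: "j < n"
  shows "gfun (a i) (a j) < 0 \<longleftrightarrow> gfun (b i) (b j) < 0"
proof -
  obtain g where g: "pathin (HomSO3_top n) g" "g 0 = a" "g 1 = b"
    using p unfolding path_component_of_def by blast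
  define f where "f t = gfun (g t i) (g t j)" for t
  have cf: "continuous_on {0..1} f" unfolding f_def
    using g(1) i j unfolding pathin_X by (intro cont_gfun) auto
  have dich: "f t = -3 \<or> f t \<ge> 0" if "t \<in> {0..1}" for t
  proof -
    have "g t \<in> HomSO3 n" using g(1) that unfolding pathin_X by blast
    hence "g t i \<in> SO3" "g t j \<in> SO3" "g t i ** g t j = g t j ** g t i"
      using i j by (auto simp: HomSO3_def PiE_iff)
    thus ?thesis unfolding f_def by (rule gfun_dich)
  qed
  have "f 0 < 0 \<longleftrightarrow> f 1 < 0"
  proof
    assume "f 0 < 0"
    show "f 1 < 0"
    proof (rule ccontr)
      assume "\<not> f 1 < 0"
      hence "f 0 \<le> -1" "-1 \<le> f 1" using dich[of 0] \<open>f 0 < 0\<close> by auto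
      then obtain t where "0 \<le> t" "t \<le> 1" "f t = -1" using IVT'[of f 0 "-1" 1] cf by auto
      thus False using dich[of t] by auto
    qed
  next
    assume "f 1 < 0"
    show "f 0 < 0"
    proof (rule ccontr)
      assume "\<not> f 0 < 0"
      hence "f 1 \<le> -1" "-1 \<le> f 0" using dich[of 1] \<open>f 1 < 0\<close> by auto
      then obtain t where "0 \<le> t" "t \<le> 1" "f t = -1" using IVT2'[of f 1 "-1" 0] cf by auto
      thus False using dich[of t] by auto
    qed
  qed
  thus ?thesis using g by (simp add: f_def)
qed

lemma so3_path:
  assumes Q: "Q \<in> SO3"
  shows "\<exists>P::real \<Rightarrow> real^3^3. continuous_on {0..1} P \<and> (\<forall>t. P t \<in> SO3) \<and> P 0 = mat 1 \<and> P 1 = Q"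
proof -
  obtain u where u: "norm u = 1" "Q *v u = u" using SO3_fix Q by blast
  obtain R where R: "R \<in> SO3" "R *v axis 1 1 = u" using frame[OF u(1)] by blast
  have "cj R Q *v axis 1 1 = transpose R *v (Q *v (R *v axis 1 1))"
    by (simp add: cj_def matrix_vector_mul_assoc matrix_mul_assoc)
  also have "\<dots> = transpose R *v (R *v axis 1 1)" using u R by (simp del: transpose_matrix_vector)
  also have "\<dots> = (transpose R ** R) *v axis 1 1" by (simp only: matrix_vector_mul_assoc)
  also have "\<dots> = axis 1 1" using SO3_left[OF R(1)] by simp
  finally obtain c s where cs: "c^2+s^2=1" "cj R Q = blk c s" using fix_e1 cj_SO3[OF R(1) Q] by blast
  obtain th where th: "c = cos th" "s = sin th" using sincos_total_2pi[OF cs(1)] by blast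
  have RT: "transpose R \<in> SO3" using R(1) by (rule SO3_transpose)
  define P where "P t = cj (transpose R) (blk (cos (t*th)) (sin (t*th)))" for t
  have "continuous_on {0..1} P" unfolding P_def cj_def
    by (intro cont_mm cont_tr cont_blk continuous_intros)
  moreover have "\<forall>t. P t \<in> SO3" unfolding P_def by (intro allI cj_SO3 RT SO3_blk) simp
  moreover have "P 0 = mat 1" unfolding P_def using blk_1 cj_one[OF RT] by simp
  moreover have "P 1 = Q"
  proof -
    have "P 1 = R ** cj R Q ** transpose R" using cs th by (simp add: P_def cj_def)
    thus ?thesis using cj_inv[OF R(1)] by simp
  qed
  ultimately show ?thesis by blast
qed

lemma conj_path:
  assumes x: "x \<in> HomSO3 n" and Q: "Q \<in> SO3"
  shows "path_component_of (HomSO3_top n) x (restrict (\<lambda>i. cj Q (x i)) {..<n})"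
proof -
  obtain P :: "real \<Rightarrow> real^3^3" where P: "continuous_on {0..1} P" "\<forall>t. P t \<in> SO3" "P 0 = mat 1" "P 1 = Q"
    using so3_path[OF Q] by blast
  define g where "g t = restrict (\<lambda>i. cj (P t) (x i)) {..<n}" for t :: real
  have "pathin (HomSO3_top n) g"
    unfolding pathin_X
  proof (intro conjI ballI allI impI)
    fix t :: real
    show "g t \<in> HomSO3 n" using x P(2)
      by (auto simp: g_def HomSO3_def PiE_iff cj_SO3 cj_comm)
  next
    fix i assume "i < n"
    thus "continuous_on {0..1} (\<lambda>t. g t i)" unfolding g_def using P(1) by (simp add: cont_cj)
  qed
  moreover have "g 0 = x" using x by (auto simp: g_def cj_id P(3) HomSO3_def PiE_iff restrict_def extensional_def)
  moreover have "g 1 = restrict (\<lambda>i. cj Q (x i)) {..<n}" by (simp add: g_def P(4))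
  ultimately show ?thesis unfolding path_component_of_def by blast
qed

lemma torus_path:
  shows "path_component_of (HomSO3_top n) (restrict (\<lambda>_. mat 1) {..<n})
           (restrict (\<lambda>i. blk (cos (th i)) (sin (th i))) {..<n})"
proof -
  define g where "g t = restrict (\<lambda>i. blk (cos (t * th i)) (sin (t * th i))) {..<n}" for t :: real
  have "pathin (HomSO3_top n) g"
    unfolding pathin_X
  proof (intro conjI ballI allI impI)
    fix t :: real
    show "g t \<in> HomSO3 n"
      by (auto simp: g_def HomSO3_def PiE_iff SO3_blk blk_mult algebra_simps)
  next
    fix i assume "i < n"
    thus "continuous_on {0..1} (\<lambda>t. g t i)" unfolding g_def
      by (simp add: cont_blk continuous_intros)
  qed
  moreover have "g 0 = restrict (\<lambda>_. mat 1) {..<n}" by (simp add: g_def blk_1)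
  moreover have "g 1 = restrict (\<lambda>i. blk (cos (th i)) (sin (th i))) {..<n}" by (simp add: g_def)
  ultimately show ?thesis unfolding path_component_of_def by blast
qed

definition M3 :: "real \<Rightarrow> real \<Rightarrow> real \<Rightarrow> real \<Rightarrow> real \<Rightarrow> real \<Rightarrow> real \<Rightarrow> real \<Rightarrow> real \<Rightarrow> real^3^3" where
  "M3 a b c d e f g h k = (\<chi> i j. if i = 1 then (if j = 1 then a else if j = 2 then b else c)
     else if i = 2 then (if j = 1 then d else if j = 2 then e else f)
     else (if j = 1 then g else if j = 2 then h else k))"

lemma permQ0: "\<exists>Q\<in>SO3. Qbar_emb (0::bit,1::bit) = cj Q (Qbar_emb (1,0)) \<and> Qbar_emb (1::bit,0::bit) = cj Q (Qbar_emb (0,1)) \<and> Qbar_emb (1::bit,1::bit) = cj Q (Qbar_emb (1,1))"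
  by (rule bexI[of _ "M3 (0) (1) (0) (1) (0) (0) (0) (0) (-1)"])
     (simp_all add: SO3_def M3_def Qbar_emb_def cj_def vec_eq_iff forall_3 matrix_matrix_mult_def sum_3 transpose_def mat_def det_3)

lemma permQ1: "\<exists>Q\<in>SO3. Qbar_emb (0::bit,1::bit) = cj Q (Qbar_emb (1,0)) \<and> Qbar_emb (1::bit,1::bit) = cj Q (Qbar_emb (0,1)) \<and> Qbar_emb (1::bit,0::bit) = cj Q (Qbar_emb (1,1))"
  by (rule bexI[of _ "M3 (0) (0) (1) (1) (0) (0) (0) (1) (0)"])
     (simp_all add: SO3_def M3_def Qbar_emb_def cj_def vec_eq_iff forall_3 matrix_matrix_mult_def sum_3 transpose_def mat_def det_3)

lemma permQ2: "\<exists>Q\<in>SO3. Qbar_emb (1::bit,0::bit) = cj Q (Qbar_emb (1,0)) \<and> Qbar_emb (0::bit,1::bit) = cj Q (Qbar_emb (0,1)) \<and> Qbar_emb (1::bit,1::bit) = cj Q (Qbar_emb (1,1))"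
  by (rule bexI[of _ "M3 (1) (0) (0) (0) (1) (0) (0) (0) (1)"])
     (simp_all add: SO3_def M3_def Qbar_emb_def cj_def vec_eq_iff forall_3 matrix_matrix_mult_def sum_3 transpose_def mat_def det_3)

lemma permQ3: "\<exists>Q\<in>SO3. Qbar_emb (1::bit,0::bit) = cj Q (Qbar_emb (1,0)) \<and> Qbar_emb (1::bit,1::bit) = cj Q (Qbar_emb (0,1)) \<and> Qbar_emb (0::bit,1::bit) = cj Q (Qbar_emb (1,1))"
  by (rule bexI[of _ "M3 (0) (0) (1) (0) (1) (0) (-1) (0) (0)"])
     (simp_all add: SO3_def M3_def Qbar_emb_def cj_def vec_eq_iff forall_3 matrix_matrix_mult_def sum_3 transpose_def mat_def det_3)

lemma permQ4: "\<exists>Q\<in>SO3. Qbar_emb (1::bit,1::bit) = cj Q (Qbar_emb (1,0)) \<and> Qbar_emb (0::bit,1::bit) = cj Q (Qbar_emb (0,1)) \<and> Qbar_emb (1::bit,0::bit) = cj Q (Qbar_emb (1,1))"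
  by (rule bexI[of _ "M3 (1) (0) (0) (0) (0) (1) (0) (-1) (0)"])
     (simp_all add: SO3_def M3_def Qbar_emb_def cj_def vec_eq_iff forall_3 matrix_matrix_mult_def sum_3 transpose_def mat_def det_3)

lemma permQ5: "\<exists>Q\<in>SO3. Qbar_emb (1::bit,1::bit) = cj Q (Qbar_emb (1,0)) \<and> Qbar_emb (1::bit,0::bit) = cj Q (Qbar_emb (0,1)) \<and> Qbar_emb (0::bit,1::bit) = cj Q (Qbar_emb (1,1))"
  by (rule bexI[of _ "M3 (0) (1) (0) (0) (0) (1) (1) (0) (0)"])
     (simp_all add: SO3_def M3_def Qbar_emb_def cj_def vec_eq_iff forall_3 matrix_matrix_mult_def sum_3 transpose_def mat_def det_3)

lemma perm_Q:
  assumes "v1 \<noteq> (0,0)" "v2 \<noteq> (0,0)" "v3 \<noteq> (0,0)" "v1 \<noteq> v2" "v1 \<noteq> v3" "v2 \<noteq> v3"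
  shows "\<exists>Q\<in>SO3. Qbar_emb v1 = cj Q (Qbar_emb (1,0)) \<and> Qbar_emb v2 = cj Q (Qbar_emb (0,1)) \<and> Qbar_emb v3 = cj Q (Qbar_emb (1,1))"
  using assms
  by (cases v1 rule: bitpair_cases; cases v2 rule: bitpair_cases; cases v3 rule: bitpair_cases)
     (simp_all add: permQ0 permQ1 permQ2 permQ3 permQ4 permQ5)

lemma sig_Q:
  assumes s: "\<sigma> \<in> Sigma3"
  shows "\<exists>Q\<in>SO3. \<forall>p. Qbar_emb (\<sigma> p) = cj Q (Qbar_emb p)"
proof -
  have b: "bij \<sigma>" and z: "\<sigma> (0,0) = (0,0)" using s by (auto simp: Sigma3_def)
  hence i: "inj \<sigma>" by (simp add: bij_is_inj)
  have ne: "\<sigma> p \<noteq> \<sigma> q" if "p \<noteq> q" for p q using i that unfolding inj_def by blast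
  obtain Q where Q: "Q \<in> SO3" "Qbar_emb (\<sigma> (1,0)) = cj Q (Qbar_emb (1,0))"
     "Qbar_emb (\<sigma> (0,1)) = cj Q (Qbar_emb (0,1))" "Qbar_emb (\<sigma> (1,1)) = cj Q (Qbar_emb (1,1))"
  proof -
    have n1: "\<sigma> (1,0) \<noteq> (0,0)" using ne[of "(1,0)" "(0,0)"] z by simp
    have n2: "\<sigma> (0,1) \<noteq> (0,0)" using ne[of "(0,1)" "(0,0)"] z by simp
    have n3: "\<sigma> (1,1) \<noteq> (0,0)" using ne[of "(1,1)" "(0,0)"] z by simp
    have d1: "\<sigma> (1,0) \<noteq> \<sigma> (0,1)" using ne[of "(1,0)" "(0,1)"] by simp
    have d2: "\<sigma> (1,0) \<noteq> \<sigma> (1,1)" using ne[of "(1,0)" "(1,1)"] by simp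
    have d3: "\<sigma> (0,1) \<noteq> \<sigma> (1,1)" using ne[of "(0,1)" "(1,1)"] by simp
    show ?thesis using perm_Q[OF n1 n2 n3 d1 d2 d3] that by blast
  qed
  have "Qbar_emb (\<sigma> p) = cj Q (Qbar_emb p)" for p
    by (cases p rule: bitpair_cases) (simp_all add: Q z Qbar_00 cj_one)
  thus ?thesis using Q(1) by blast
qed

lemma Qbar_SO3: "Qbar_emb p \<in> SO3"
  by (cases p rule: bitpair_cases;
      simp add: SO3_def Qbar_emb_def vec_eq_iff forall_3 matrix_matrix_mult_def sum_3 transpose_def mat_def det_3)

lemma Qbar_comm: "Qbar_emb p ** Qbar_emb q = Qbar_emb q ** Qbar_emb p"
  by (simp add: Qbar_emb_def vec_eq_iff forall_3 matrix_matrix_mult_def sum_3 mult.commute)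

lemma K0: "y \<in> HomV4 n \<Longrightarrow> restrict (Qbar_emb \<circ> y) {..<n} \<in> HomSO3 n"
  by (auto simp: HomSO3_def Qbar_SO3 Qbar_comm)

lemma K1:
  assumes y: "y \<in> HomV4 n" and s: "\<sigma> \<in> Sigma3"
  shows "path_component_of (HomSO3_top n) (restrict (Qbar_emb \<circ> y) {..<n})
           (restrict (Qbar_emb \<circ> restrict (\<sigma> \<circ> y) {..<n}) {..<n})"
proof -
  obtain Q where Q: "Q \<in> SO3" "\<forall>p. Qbar_emb (\<sigma> p) = cj Q (Qbar_emb p)" using sig_Q[OF s] by blast
  have "path_component_of (HomSO3_top n) (restrict (Qbar_emb \<circ> y) {..<n})
          (restrict (\<lambda>i. cj Q (restrict (Qbar_emb \<circ> y) {..<n} i)) {..<n})"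
    by (rule conj_path[OF K0[OF y] Q(1)])
  moreover have "restrict (\<lambda>i. cj Q (restrict (Qbar_emb \<circ> y) {..<n} i)) {..<n}
       = restrict (Qbar_emb \<circ> restrict (\<sigma> \<circ> y) {..<n}) {..<n}"
    using Q(2) by (simp add: restrict_def fun_eq_iff del: prod.collapse split_paired_All)
  ultimately show ?thesis by simp
qed

lemma cj_tr: "cj (transpose Q) X = Q ** X ** transpose Q"
  by (simp add: cj_def)

lemma K2:
  assumes x: "x \<in> HomSO3 n"
  shows "\<exists>y\<in>HomV4 n. path_component_of (HomSO3_top n) (restrict (Qbar_emb \<circ> y) {..<n}) x"
proof -
  have S: "\<forall>i\<in>{..<n}. x i \<in> SO3" and C: "\<forall>i\<in>{..<n}. \<forall>j\<in>{..<n}. x i ** x j = x j ** x i"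
    using x by (auto simp: HomSO3_def)
  obtain Q where Q: "Q \<in> SO3" and D: "(\<forall>i\<in>{..<n}. \<exists>c s. c^2+s^2=1 \<and> cj Q (x i) = blk c s)
        \<or> (\<forall>i\<in>{..<n}. \<exists>p. cj Q (x i) = Qbar_emb p)"
    using TL[OF S C] by blast
  have QT: "transpose Q \<in> SO3" using Q by (rule SO3_transpose)
  have xr: "restrict (\<lambda>i. cj (transpose Q) (cj Q (x i))) {..<n} = x"
    using x cj_inv[OF Q] by (auto simp: cj_tr HomSO3_def PiE_iff restrict_def extensional_def fun_eq_iff)
  from D show ?thesis
  proof
    assume H: "\<forall>i\<in>{..<n}. \<exists>c s. c^2+s^2=1 \<and> cj Q (x i) = blk c s"
    have "\<forall>i\<in>{..<n}. \<exists>th. cj Q (x i) = blk (cos th) (sin th)"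
    proof
      fix i assume "i \<in> {..<n}"
      then obtain c s where "c^2+s^2=1" "cj Q (x i) = blk c s" using H by blast
      moreover obtain th where "c = cos th" "s = sin th" using sincos_total_2pi[OF \<open>c^2+s^2=1\<close>] by blast
      ultimately show "\<exists>th. cj Q (x i) = blk (cos th) (sin th)" by blast
    qed
    then obtain th where th: "\<forall>i\<in>{..<n}. cj Q (x i) = blk (cos (th i)) (sin (th i))"
      by (metis bchoice)
    define b where "b = restrict (\<lambda>i. blk (cos (th i)) (sin (th i))) {..<n}"
    have p1: "path_component_of (HomSO3_top n) (restrict (\<lambda>_. mat 1) {..<n}) b"
      unfolding b_def by (rule torus_path)
    hence bH: "b \<in> HomSO3 n" using path_component_in_topspace topspace_X by metis
    have p2: "path_component_of (HomSO3_top n) b (restrict (\<lambda>i. cj (transpose Q) (b i)) {..<n})"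
      by (rule conj_path[OF bH QT])
    have "restrict (\<lambda>i. cj (transpose Q) (b i)) {..<n} = restrict (\<lambda>i. cj (transpose Q) (cj Q (x i))) {..<n}"
      using th by (auto simp: b_def restrict_def fun_eq_iff)
    hence p3: "path_component_of (HomSO3_top n) (restrict (\<lambda>_. mat 1) {..<n}) x"
      using path_component_of_trans[OF p1 p2] xr by simp
    define y where "y = restrict (\<lambda>_. (0::bit,0::bit)) {..<n}"
    have "y \<in> HomV4 n" by (simp add: y_def HomV4_def)
    moreover have "restrict (Qbar_emb \<circ> y) {..<n} = restrict (\<lambda>_. mat 1) {..<n}"
      by (auto simp: y_def Qbar_00 restrict_def fun_eq_iff)
    ultimately show ?thesis using p3 by (intro bexI[of _ y]) simp_all
  next
    assume H: "\<forall>i\<in>{..<n}. \<exists>p. cj Q (x i) = Qbar_emb p"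
    then obtain p where p: "\<forall>i\<in>{..<n}. cj Q (x i) = Qbar_emb (p i)" by (metis bchoice)
    define y where "y = restrict p {..<n}"
    have yV: "y \<in> HomV4 n" by (simp add: y_def HomV4_def)
    have p2: "path_component_of (HomSO3_top n) (restrict (Qbar_emb \<circ> y) {..<n})
        (restrict (\<lambda>i. cj (transpose Q) (restrict (Qbar_emb \<circ> y) {..<n} i)) {..<n})"
      by (rule conj_path[OF K0[OF yV] QT])
    have "restrict (\<lambda>i. cj (transpose Q) (restrict (Qbar_emb \<circ> y) {..<n} i)) {..<n}
          = restrict (\<lambda>i. cj (transpose Q) (cj Q (x i))) {..<n}"
      using p by (auto simp: y_def restrict_def fun_eq_iff)
    thus ?thesis using p2 xr yV by (intro bexI[of _ y]) simp_all
  qed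
qed

lemma Qbar_0b: "Qbar_emb (0, b) = blk (cos (if b = 0 then 0 else pi)) (sin (if b = 0 then 0 else pi))"
  using bit_cases[of b] by (auto simp: Qbar_emb_def blk_def vec_eq_iff forall_3)

definition swp :: "bit \<times> bit \<Rightarrow> bit \<times> bit" where "swp p = (snd p, fst p)"

lemma swp_Sigma3: "swp \<in> Sigma3"
proof -
  have "swp \<circ> swp = id" by (auto simp: swp_def)
  hence "bij swp" using o_bij by blast
  thus ?thesis by (simp add: Sigma3_def swp_def)
qed

lemma K7:
  assumes a: "a \<in> HomZ2 n"
  shows "path_component_of (HomSO3_top n) (restrict (\<lambda>_. mat 1) {..<n})
            (restrict (Qbar_emb \<circ> restrict (\<lambda>i. (a i, 0)) {..<n}) {..<n})"
proof -
  define y0 where "y0 = restrict (\<lambda>i. (a i, 0::bit)) {..<n}"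
  have y0V: "y0 \<in> HomV4 n" by (simp add: y0_def HomV4_def)
  have p1: "path_component_of (HomSO3_top n) (restrict (Qbar_emb \<circ> y0) {..<n})
           (restrict (Qbar_emb \<circ> restrict (swp \<circ> y0) {..<n}) {..<n})"
    by (rule K1[OF y0V swp_Sigma3])
  define th where "th i = (if a i = 0 then 0 else pi)" for i
  have "restrict (Qbar_emb \<circ> restrict (swp \<circ> y0) {..<n}) {..<n} = restrict (\<lambda>i. blk (cos (th i)) (sin (th i))) {..<n}"
    by (auto simp: y0_def swp_def th_def Qbar_0b restrict_def fun_eq_iff)
  hence "path_component_of (HomSO3_top n) (restrict (\<lambda>_. mat 1) {..<n}) (restrict (Qbar_emb \<circ> restrict (swp \<circ> y0) {..<n}) {..<n})"
    using torus_path by simp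
  hence "path_component_of (HomSO3_top n) (restrict (\<lambda>_. mat 1) {..<n}) (restrict (Qbar_emb \<circ> y0) {..<n})"
    by (rule path_component_of_trans[OF _ path_component_of_sym[OF p1]])
  thus ?thesis unfolding y0_def .
qed

lemma Sigma3_id: "id \<in> Sigma3" by (simp add: Sigma3_def)

lemma Sigma3_comp: "\<sigma> \<in> Sigma3 \<Longrightarrow> \<tau> \<in> Sigma3 \<Longrightarrow> \<tau> \<circ> \<sigma> \<in> Sigma3"
  by (auto simp: Sigma3_def bij_comp)

lemma Sigma3_inv: "\<sigma> \<in> Sigma3 \<Longrightarrow> inv \<sigma> \<in> Sigma3 \<and> (\<forall>z. inv \<sigma> (\<sigma> z) = z)"
proof -
  assume s: "\<sigma> \<in> Sigma3"
  hence b: "bij \<sigma>" and z: "\<sigma> (0,0) = (0,0)" by (auto simp: Sigma3_def)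
  have i: "\<forall>z. inv \<sigma> (\<sigma> z) = z" using b by (simp add: bij_is_inj)
  have "inv \<sigma> (0,0) = (0,0)" using i z by metis
  thus ?thesis using b i by (simp add: Sigma3_def bij_imp_bij_inv)
qed

lemma orb_self: "x \<in> HomV4 n \<Longrightarrow> x \<in> V4_orbit n x"
proof -
  assume x: "x \<in> HomV4 n"
  have "restrict (id \<circ> x) {..<n} = x" using x
    by (auto simp: HomV4_def PiE_def restrict_def extensional_def fun_eq_iff)
  thus ?thesis unfolding V4_orbit_def by (intro image_eqI[where x=id] Sigma3_id) simp
qed

lemma orb_act:
  assumes s: "\<sigma> \<in> Sigma3"
  shows "V4_orbit n (restrict (\<sigma> \<circ> x) {..<n}) = V4_orbit n x"
proof
  show "V4_orbit n (restrict (\<sigma> \<circ> x) {..<n}) \<subseteq> V4_orbit n x"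
  proof
    fix z assume "z \<in> V4_orbit n (restrict (\<sigma> \<circ> x) {..<n})"
    then obtain \<tau> where t: "\<tau> \<in> Sigma3" "z = restrict (\<tau> \<circ> restrict (\<sigma> \<circ> x) {..<n}) {..<n}"
      unfolding V4_orbit_def by blast
    show "z \<in> V4_orbit n x" unfolding V4_orbit_def
    proof (rule image_eqI[where x="\<tau> \<circ> \<sigma>"])
      show "z = restrict ((\<tau> \<circ> \<sigma>) \<circ> x) {..<n}" using t(2) by (simp add: restrict_def fun_eq_iff)
      show "\<tau> \<circ> \<sigma> \<in> Sigma3" by (rule Sigma3_comp[OF s t(1)])
    qed
  qed
next
  show "V4_orbit n x \<subseteq> V4_orbit n (restrict (\<sigma> \<circ> x) {..<n})"
  proof
    fix z assume "z \<in> V4_orbit n x"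
    then obtain \<tau> where t: "\<tau> \<in> Sigma3" "z = restrict (\<tau> \<circ> x) {..<n}"
      unfolding V4_orbit_def by blast
    have si: "inv \<sigma> \<in> Sigma3" "\<forall>z. inv \<sigma> (\<sigma> z) = z" using Sigma3_inv[OF s] by auto
    show "z \<in> V4_orbit n (restrict (\<sigma> \<circ> x) {..<n})" unfolding V4_orbit_def
    proof (rule image_eqI[where x="\<tau> \<circ> inv \<sigma>"])
      show "z = restrict ((\<tau> \<circ> inv \<sigma>) \<circ> restrict (\<sigma> \<circ> x) {..<n}) {..<n}"
        using t si(2) by (simp add: restrict_def fun_eq_iff del: split_paired_All)
      show "\<tau> \<circ> inv \<sigma> \<in> Sigma3" by (rule Sigma3_comp[OF si(1) t(1)])
    qed
  qed
qed

lemma orb_eq: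
  assumes "y \<in> HomV4 n" "V4_orbit n x = V4_orbit n y"
  shows "\<exists>\<sigma>\<in>Sigma3. y = restrict (\<sigma> \<circ> x) {..<n}"
proof -
  have "y \<in> V4_orbit n x" using orb_self[OF assms(1)] assms(2) by simp
  thus ?thesis unfolding V4_orbit_def by blast
qed

definition vadd :: "bit \<times> bit \<Rightarrow> bit \<times> bit \<Rightarrow> bit \<times> bit" where
  "vadd a b = (fst a + fst b, snd a + snd b)"

lemma third:
  assumes "a \<noteq> (0,0)" "b \<noteq> (0,0)" "a \<noteq> b"
  shows "vadd a b \<noteq> (0,0) \<and> vadd a b \<noteq> a \<and> vadd a b \<noteq> b \<and> (\<forall>z. z = (0,0) \<or> z = a \<or> z = b \<or> z = vadd a b)"
proof -
  have all4: "\<And>z. z = (0,0) \<or> z = (0,1) \<or> z = (1,0) \<or> z = ((1::bit),(1::bit))"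
    by (metis bitpair_cases)
  show ?thesis using assms
    by (cases a rule: bitpair_cases; cases b rule: bitpair_cases; simp add: vadd_def; use all4 in blast)
qed

definition pmap :: "bit \<times> bit \<Rightarrow> bit \<times> bit \<Rightarrow> bit \<times> bit \<Rightarrow> bit \<times> bit \<Rightarrow> bit \<times> bit \<Rightarrow> bit \<times> bit" where
  "pmap a b a' b' z = (if z = (0,0) then (0,0) else if z = a then a' else if z = b then b' else vadd a' b')"

lemma pmap_inv:
  assumes a: "a \<noteq> (0,0)" "b \<noteq> (0,0)" "a \<noteq> b" and a': "a' \<noteq> (0,0)" "b' \<noteq> (0,0)" "a' \<noteq> b'"
  shows "pmap a' b' a b (pmap a b a' b' z) = z"
proof -
  note t = third[OF a] and t' = third[OF a']
  have F: "a \<noteq> (0,0)" "b \<noteq> (0,0)" "a \<noteq> b" "b \<noteq> a" "vadd a b \<noteq> (0,0)" "vadd a b \<noteq> a" "a \<noteq> vadd a b"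
    "vadd a b \<noteq> b" "b \<noteq> vadd a b"
    "a' \<noteq> (0,0)" "b' \<noteq> (0,0)" "a' \<noteq> b'" "b' \<noteq> a'" "vadd a' b' \<noteq> (0,0)" "vadd a' b' \<noteq> a'" "a' \<noteq> vadd a' b'"
    "vadd a' b' \<noteq> b'" "b' \<noteq> vadd a' b'"
    using a a' t t' by metis+
  have "z = (0,0) \<or> z = a \<or> z = b \<or> z = vadd a b" using t by blast
  thus ?thesis by (elim disjE) (simp_all only: pmap_def F if_True if_False refl)
qed

lemma pmap_Sigma3:
  assumes a: "a \<noteq> (0,0)" "b \<noteq> (0,0)" "a \<noteq> b" and a': "a' \<noteq> (0,0)" "b' \<noteq> (0,0)" "a' \<noteq> b'"
  shows "pmap a b a' b' \<in> Sigma3"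
proof -
  have "pmap a' b' a b \<circ> pmap a b a' b' = id" using pmap_inv[OF a a'] by (simp add: fun_eq_iff)
  moreover have "pmap a b a' b' \<circ> pmap a' b' a b = id" using pmap_inv[OF a' a] by (simp add: fun_eq_iff)
  ultimately have "bij (pmap a b a' b')" using o_bij by blast
  thus ?thesis by (simp add: Sigma3_def pmap_def)
qed

lemma om_pattern:
  assumes a: "a \<noteq> (0,0)" "b \<noteq> (0,0)" "a \<noteq> b" and a': "a' \<noteq> (0,0)" "b' \<noteq> (0,0)" "a' \<noteq> b'"
    and e1: "om z a = om w a'" and e2: "om z b = om w b'"
  shows "w = pmap a b a' b' z"
proof -
  note t = third[OF a] and t' = third[OF a']
  have F: "a \<noteq> (0,0)" "b \<noteq> (0,0)" "a \<noteq> b" "b \<noteq> a" "vadd a b \<noteq> (0,0)" "vadd a b \<noteq> a" "a \<noteq> vadd a b"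
    "vadd a b \<noteq> b" "b \<noteq> vadd a b"
    "a' \<noteq> (0,0)" "b' \<noteq> (0,0)" "a' \<noteq> b'" "b' \<noteq> a'" "vadd a' b' \<noteq> (0,0)" "vadd a' b' \<noteq> a'" "a' \<noteq> vadd a' b'"
    "vadd a' b' \<noteq> b'" "b' \<noteq> vadd a' b'"
    using a a' t t' by metis+
  have z: "z = (0,0) \<or> z = a \<or> z = b \<or> z = vadd a b" using t by blast
  have w: "w = (0,0) \<or> w = a' \<or> w = b' \<or> w = vadd a' b'" using t' by blast
  show ?thesis using z w e1 e2
    by (elim disjE) (simp_all only: pmap_def om_def F if_True if_False refl simp_thms)
qed

lemma K4:
  assumes x: "x \<in> HomV4 n" and y: "y \<in> HomV4 n"
    and P: "\<forall>i<n. \<forall>j<n. om (x i) (x j) = om (y i) (y j)"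
    and i0: "i0 < n" and j0: "j0 < n" and o: "om (x i0) (x j0)"
  shows "\<exists>\<sigma>\<in>Sigma3. y = restrict (\<sigma> \<circ> x) {..<n}"
proof -
  have o': "om (y i0) (y j0)" using P i0 j0 o by blast
  have a: "x i0 \<noteq> (0,0)" "x j0 \<noteq> (0,0)" "x i0 \<noteq> x j0" using o by (auto simp: om_def)
  have a': "y i0 \<noteq> (0,0)" "y j0 \<noteq> (0,0)" "y i0 \<noteq> y j0" using o' by (auto simp: om_def)
  define \<sigma> where "\<sigma> = pmap (x i0) (x j0) (y i0) (y j0)"
  have s: "\<sigma> \<in> Sigma3" unfolding \<sigma>_def by (rule pmap_Sigma3[OF a a'])
  have k: "y k = \<sigma> (x k)" if "k < n" for k
    unfolding \<sigma>_def
    by (rule om_pattern[OF a a']) (use P that i0 j0 in blast)+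
  have "y = restrict (\<sigma> \<circ> x) {..<n}"
  proof
    fix k show "y k = restrict (\<sigma> \<circ> x) {..<n} k"
      using k y by (cases "k < n") (auto simp: HomV4_def PiE_def extensional_def)
  qed
  thus ?thesis using s by blast
qed

lemma to10:
  assumes "p \<noteq> (0,0)" shows "\<exists>\<sigma>\<in>Sigma3. \<sigma> p = (1,0)"
proof -
  define q where "q = (if p = (0,1) then (1,0) else (0::bit,1::bit))"
  have q: "q \<noteq> (0,0)" "p \<noteq> q" by (auto simp: q_def)
  have "pmap p q (1,0) (0,1) \<in> Sigma3"
    by (rule pmap_Sigma3) (use assms q in auto)
  moreover have "pmap p q (1,0) (0,1) p = (1,0)" using assms by (simp add: pmap_def)
  ultimately show ?thesis by blast
qed

lemma K5:
  assumes x: "x \<in> HomV4 n" and C: "\<forall>i<n. \<forall>j<n. \<not> om (x i) (x j)"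
  shows "V4_orbit n x \<in> top_map n ` HomZ2 n"
proof -
  define p where "p = (if \<exists>k<n. x k \<noteq> (0,0) then x (SOME k. k < n \<and> x k \<noteq> (0,0)) else (1,0))"
  have p0: "p \<noteq> (0,0)"
  proof (cases "\<exists>k<n. x k \<noteq> (0,0)")
    case True
    hence "(SOME k. k < n \<and> x k \<noteq> (0,0)) < n \<and> x (SOME k. k < n \<and> x k \<noteq> (0,0)) \<noteq> (0,0)"
      using someI_ex[where P="\<lambda>k. k < n \<and> x k \<noteq> (0,0)"] by blast
    thus ?thesis using True by (simp add: p_def)
  next
    case False
    hence "p = (1,0)" unfolding p_def by (rule if_not_P)
    thus ?thesis by simp
  qed
  have xp: "x i = (0,0) \<or> x i = p" if i: "i < n" for i
  proof (cases "x i = (0,0)")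
    case False
    hence ex: "\<exists>k<n. x k \<noteq> (0,0)" using i by blast
    define k where "k = (SOME k. k < n \<and> x k \<noteq> (0,0))"
    have k: "k < n" "x k \<noteq> (0,0)" unfolding k_def
      using someI_ex[where P="\<lambda>k. k < n \<and> x k \<noteq> (0,0)"] ex by blast+
    have "p = x k" using ex by (simp add: p_def k_def)
    moreover have "\<not> om (x i) (x k)" using C i k(1) by blast
    ultimately show ?thesis using False k(2) by (auto simp: om_def)
  qed simp
  obtain \<sigma> where s: "\<sigma> \<in> Sigma3" "\<sigma> p = (1,0)" using to10[OF p0] by blast
  have s0: "\<sigma> (0,0) = (0,0)" using s(1) by (simp add: Sigma3_def)
  define a where "a = restrict (\<lambda>i. fst (\<sigma> (x i))) {..<n}"
  have aZ: "a \<in> HomZ2 n" by (simp add: a_def HomZ2_def)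
  have "restrict (\<lambda>i. (a i, 0)) {..<n} = restrict (\<sigma> \<circ> x) {..<n}"
  proof
    fix i show "restrict (\<lambda>i. (a i, 0)) {..<n} i = restrict (\<sigma> \<circ> x) {..<n} i"
    proof (cases "i < n")
      case True
      then show ?thesis using xp[OF True] s(2) s0 by (auto simp: a_def)
    qed simp
  qed
  hence "top_map n a = V4_orbit n x" by (simp add: top_map_def orb_act[OF s(1)])
  thus ?thesis using aZ by blast
qed

lemma pc_eq: "path_component_of X a b \<Longrightarrow> path_component_of_set X a = path_component_of_set X b"
  by (metis path_component_of_equiv)

lemma pc_eq_rev: "b \<in> topspace X \<Longrightarrow> path_component_of_set X a = path_component_of_set X b \<Longrightarrow> path_component_of X a b"
  by (metis mem_Collect_eq path_component_of_refl)

theorem mainTheorem8: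
  fixes n :: nat
  shows "(\<forall>x\<in>HomV4 n. \<forall>y\<in>HomV4 n. V4_orbit n x = V4_orbit n y \<longrightarrow> right_rep n x = right_rep n y)
    \<and> set_pushout TYPE('z) (HomZ2 n) (HomV4_mod_Sigma3 n) {()} (pi0_HomSO3 n)
        (top_map n) (\<lambda>_. ()) (right_map n) (bottom_map n)"
proof -
  let ?X = "HomSO3_top n"
  let ?q = "\<lambda>x. restrict (Qbar_emb \<circ> x) {..<n}"
  let ?B = "HomV4_mod_Sigma3 n"
  let ?Cyc = "top_map n ` HomZ2 n"
  have F1: "\<forall>x\<in>HomV4 n. \<forall>y\<in>HomV4 n. V4_orbit n x = V4_orbit n y \<longrightarrow> right_rep n x = right_rep n y"
  proof (intro ballI impI)
    fix x y assume x: "x \<in> HomV4 n" and y: "y \<in> HomV4 n" and e: "V4_orbit n x = V4_orbit n y"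
    obtain \<sigma> where s: "\<sigma> \<in> Sigma3" "y = restrict (\<sigma> \<circ> x) {..<n}" using orb_eq[OF y e] by blast
    have "path_component_of ?X (?q x) (?q y)" using K1[OF x s(1)] s(2) by simp
    thus "right_rep n x = right_rep n y" unfolding right_rep_def by (rule pc_eq)
  qed
  have RM: "right_map n (V4_orbit n x) = right_rep n x" if x: "x \<in> HomV4 n" for x
  proof -
    let ?x' = "SOME x'. x' \<in> HomV4 n \<and> V4_orbit n x' = V4_orbit n x"
    have "?x' \<in> HomV4 n \<and> V4_orbit n ?x' = V4_orbit n x"
      by (rule someI[of _ x]) (simp add: x)
    hence "right_rep n ?x' = right_rep n x" using F1 x by blast
    thus ?thesis by (simp add: right_map_def)
  qed
  have qH: "?q x \<in> topspace ?X" if "x \<in> HomV4 n" for x using K0[OF that] topspace_X by simp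
  have INJ: "V4_orbit n x = V4_orbit n y \<or> (V4_orbit n x \<in> ?Cyc \<and> V4_orbit n y \<in> ?Cyc)"
    if x: "x \<in> HomV4 n" and y: "y \<in> HomV4 n" and e: "right_rep n x = right_rep n y" for x y
  proof -
    have pc: "path_component_of ?X (?q x) (?q y)"
      using e unfolding right_rep_def by (rule pc_eq_rev[OF qH[OF y]])
    have P: "\<forall>i<n. \<forall>j<n. om (x i) (x j) = om (y i) (y j)"
    proof (intro allI impI)
      fix i j assume i: "i < n" and j: "j < n"
      have "gfun (?q x i) (?q x j) < 0 \<longleftrightarrow> gfun (?q y i) (?q y j) < 0" by (rule path_inv[OF pc i j])
      thus "om (x i) (x j) = om (y i) (y j)" using i j by (simp add: gfun_Qbar_om)
    qed
    show ?thesis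
    proof (cases "\<exists>i0<n. \<exists>j0<n. om (x i0) (x j0)")
      case True
      then obtain i0 j0 where "i0 < n" "j0 < n" "om (x i0) (x j0)" by blast
      then obtain \<sigma> where s: "\<sigma> \<in> Sigma3" "y = restrict (\<sigma> \<circ> x) {..<n}" using K4[OF x y P] by blast
      have "V4_orbit n y = V4_orbit n x" using orb_act[OF s(1)] s(2) by simp
      thus ?thesis by simp
    next
      case False
      hence "\<forall>i<n. \<forall>j<n. \<not> om (x i) (x j)" by blast
      moreover hence "\<forall>i<n. \<forall>j<n. \<not> om (y i) (y j)" using P by blast
      ultimately show ?thesis using K5[OF x] K5[OF y] by blast
    qed
  qed
  have INJ': "b = b' \<or> (b \<in> ?Cyc \<and> b' \<in> ?Cyc)"
    if b: "b \<in> ?B" and b': "b' \<in> ?B" and e: "right_map n b = right_map n b'" for b b'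
  proof -
    obtain x where x: "x \<in> HomV4 n" "b = V4_orbit n x" using b by (auto simp: HomV4_mod_Sigma3_def)
    obtain y where y: "y \<in> HomV4 n" "b' = V4_orbit n y" using b' by (auto simp: HomV4_mod_Sigma3_def)
    have "right_rep n x = right_rep n y" using e RM[OF x(1)] RM[OF y(1)] x(2) y(2) by simp
    thus ?thesis using INJ[OF x(1) y(1)] x(2) y(2) by simp
  qed
  have topB: "top_map n a \<in> ?B" if "a \<in> HomZ2 n" for a
  proof -
    have "restrict (\<lambda>i. (a i, 0::bit)) {..<n} \<in> HomV4 n" by (simp add: HomV4_def)
    thus ?thesis unfolding top_map_def HomV4_mod_Sigma3_def by (rule imageI)
  qed
  have idH: "restrict (\<lambda>_. mat 1) {..<n} \<in> topspace ?X"
  proof -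
    have "restrict (\<lambda>_. (0::bit,0::bit)) {..<n} \<in> HomV4 n" by (simp add: HomV4_def)
    moreover have "restrict (Qbar_emb \<circ> restrict (\<lambda>_. (0::bit,0::bit)) {..<n}) {..<n} = restrict (\<lambda>_. mat 1) {..<n}"
      by (auto simp: Qbar_00 restrict_def fun_eq_iff)
    ultimately show ?thesis using qH by metis
  qed
  have COMM: "right_map n (top_map n a) = bottom_map n ()" if a: "a \<in> HomZ2 n" for a
  proof -
    have yV: "restrict (\<lambda>i. (a i, 0::bit)) {..<n} \<in> HomV4 n" by (simp add: HomV4_def)
    have "right_map n (top_map n a) = right_rep n (restrict (\<lambda>i. (a i, 0::bit)) {..<n})"
      unfolding top_map_def by (rule RM[OF yV])
    also have "\<dots> = bottom_map n ()"
      unfolding right_rep_def bottom_map_def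
      using pc_eq[OF K7[OF a]] by simp
    finally show ?thesis .
  qed
  have RMpi: "right_map n b \<in> pi0_HomSO3 n" if bB: "b \<in> ?B" for b
  proof -
    obtain x where x: "x \<in> HomV4 n" "b = V4_orbit n x" using bB unfolding HomV4_mod_Sigma3_def by blast
    have "right_map n b = path_component_of_set ?X (?q x)" using RM[OF x(1)] x(2) by (simp add: right_rep_def)
    thus ?thesis unfolding pi0_HomSO3_def path_components_of_def using imageI[OF qH[OF x(1)], of "path_component_of_set ?X"] by simp
  qed
  have SURJ: "\<exists>b\<in>?B. d = right_map n b" if d: "d \<in> pi0_HomSO3 n" for d
  proof -
    obtain x where x: "x \<in> topspace ?X" "d = path_component_of_set ?X x"
      using d by (auto simp: pi0_HomSO3_def path_components_of_def)
    obtain y where y: "y \<in> HomV4 n" "path_component_of ?X (?q y) x"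
      using K2[of x n] x(1) topspace_X by auto
    have "d = right_rep n y" using pc_eq[OF y(2)] x(2) by (simp add: right_rep_def)
    hence "d = right_map n (V4_orbit n y)" using RM[OF y(1)] by simp
    moreover have "V4_orbit n y \<in> ?B" using y(1) by (simp add: HomV4_mod_Sigma3_def)
    ultimately show ?thesis by blast
  qed
  have a0: "restrict (\<lambda>_. 0::bit) {..<n} \<in> HomZ2 n" by (simp add: HomZ2_def)
  have UNIV_PROP: "\<exists>w. (\<forall>b\<in>?B. w (right_map n b) = u b) \<and> (\<forall>c\<in>{()}. w (bottom_map n c) = v c) \<and>
             (\<forall>w'. (\<forall>b\<in>?B. w' (right_map n b) = u b) \<and> (\<forall>c\<in>{()}. w' (bottom_map n c) = v c) \<longrightarrow>
                   (\<forall>d\<in>pi0_HomSO3 n. w' d = w d))"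
    if H: "\<forall>a\<in>HomZ2 n. u (top_map n a) = v ((\<lambda>_. ()) a)" for u :: "(nat \<Rightarrow> bit \<times> bit) set \<Rightarrow> 'z" and v :: "unit \<Rightarrow> 'z"
  proof -
    define w where "w d = (if \<exists>b\<in>?B. b \<notin> ?Cyc \<and> right_map n b = d
        then u (SOME b. b \<in> ?B \<and> b \<notin> ?Cyc \<and> right_map n b = d) else v ())" for d
    have W1: "w (right_map n b) = u b" if b: "b \<in> ?B" for b
    proof (cases "b \<in> ?Cyc")
      case True
      then obtain a where a: "a \<in> HomZ2 n" "b = top_map n a" by blast
      have ub: "u b = v ()" using H a by simp
      have "\<not> (\<exists>b'\<in>?B. b' \<notin> ?Cyc \<and> right_map n b' = right_map n b)"
        using INJ'[OF _ b] True by blast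
      hence "w (right_map n b) = v ()" unfolding w_def by (rule if_not_P)
      thus ?thesis using ub by simp
    next
      case False
      hence ex: "\<exists>b'. b' \<in> ?B \<and> b' \<notin> ?Cyc \<and> right_map n b' = right_map n b" using b by blast
      let ?b = "SOME b'. b' \<in> ?B \<and> b' \<notin> ?Cyc \<and> right_map n b' = right_map n b"
      have "?b \<in> ?B \<and> ?b \<notin> ?Cyc \<and> right_map n ?b = right_map n b" using someI_ex[OF ex] .
      hence "?b = b" using INJ' b by blast
      moreover have "\<exists>b'\<in>?B. b' \<notin> ?Cyc \<and> right_map n b' = right_map n b" using ex by blast
      ultimately show ?thesis by (simp add: w_def)
    qed
    have W2: "w (bottom_map n ()) = v ()"
    proof -
      have "w (bottom_map n ()) = w (right_map n (top_map n (restrict (\<lambda>_. 0::bit) {..<n})))"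
        using COMM[OF a0] by simp
      also have "\<dots> = u (top_map n (restrict (\<lambda>_. 0::bit) {..<n}))" by (rule W1[OF topB[OF a0]])
      also have "\<dots> = v ()" using H a0 by simp
      finally show ?thesis .
    qed
    show ?thesis
    proof (intro exI[of _ w] conjI allI impI)
      show "\<forall>b\<in>?B. w (right_map n b) = u b" using W1 by blast
      show "\<forall>c\<in>{()}. w (bottom_map n c) = v c" using W2 by simp
      fix w' assume A: "(\<forall>b\<in>?B. w' (right_map n b) = u b) \<and> (\<forall>c\<in>{()}. w' (bottom_map n c) = v c)"
      show "\<forall>d\<in>pi0_HomSO3 n. w' d = w d"
      proof
        fix d assume "d \<in> pi0_HomSO3 n"
        then obtain b where "b \<in> ?B" "d = right_map n b" using SURJ by blast
        thus "w' d = w d" using A W1 by simp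
      qed
    qed
  qed
  show ?thesis
    unfolding set_pushout_def
  proof (intro conjI F1)
    show "top_map n \<in> HomZ2 n \<rightarrow> ?B" using topB by blast
    show "(\<lambda>_. ()) \<in> HomZ2 n \<rightarrow> {()}" by simp
    show "right_map n \<in> ?B \<rightarrow> pi0_HomSO3 n" using RMpi by blast
    show "bottom_map n \<in> {()} \<rightarrow> pi0_HomSO3 n"
      using idH by (simp add: bottom_map_def pi0_HomSO3_def path_components_of_def)
    show "\<forall>a\<in>HomZ2 n. right_map n (top_map n a) = bottom_map n ((\<lambda>_. ()) a)" using COMM by simp
    show "\<forall>(u::(nat \<Rightarrow> bit \<times> bit) set \<Rightarrow> 'z) (v::unit \<Rightarrow> 'z). (\<forall>a\<in>HomZ2 n. u (top_map n a) = v ((\<lambda>_. ()) a)) \<longrightarrow>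
        (\<exists>w. (\<forall>b\<in>?B. w (right_map n b) = u b) \<and> (\<forall>c\<in>{()}. w (bottom_map n c) = v c) \<and>
             (\<forall>w'. (\<forall>b\<in>?B. w' (right_map n b) = u b) \<and> (\<forall>c\<in>{()}. w' (bottom_map n c) = v c) \<longrightarrow>
                   (\<forall>d\<in>pi0_HomSO3 n. w' d = w d)))"
      using UNIV_PROP by blast
  qed
qed

end
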